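(* Let $E$ be an almost finitely generated $R$-module and $R\to T$ a ring morphism. Then $E\otimes_RT$ is an almost finitely generated $T$-module.
   Context: Rings are commutative and unital. An $A$-module $E$ is almost finitely generated (afg) over $A$ if there is a ring morphism $A\to S$ such that $E$ is a finitely generated $S$-module whose induced $A$-module structure is the original one. *)

theory Defs
  imports "HOL-Algebra.Module"
begin

definition fin_gen :: "('s, 'x) ring_scheme \<Rightarrow> ('s, 'e) module \<Rightarrow> bool" where
  "fin_gen S M \<longleftrightarrow> (\<exists>X. finite X \<and> X \<subseteq> carrier M \<and>
     (\<forall>x \<in> carrier M. \<exists>a \<in> X \<rightarrow> carrier S.
        x = finsum M (\<lambda>v. a v \<odot>\<^bsub>M\<^esub> v) X))"

definition with_smult :: "('r, 'e) module \<Rightarrow> ('s \<Rightarrow> 'e \<Rightarrow> 'e) \<Rightarrow> ('s, 'e) module" where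
  "with_smult M sm = \<lparr>carrier = carrier M, mult = mult M, one = one M,
     zero = zero M, add = add M, smult = sm\<rparr>"

text \<open>E is afg over A, with the auxiliary ring S taken of type 's: there is a ring
 morphism phi from A to S and an S-module structure sm on E (same underlying group)
 which is finitely generated and whose restriction along phi is the original A-action.\<close>
definition afg_with :: "'s itself \<Rightarrow> ('r, 'x) ring_scheme \<Rightarrow> ('r, 'e) module \<Rightarrow> bool" where
  "afg_with _ A E \<longleftrightarrow> (\<exists>(S :: 's ring) (\<phi> :: 'r \<Rightarrow> 's) (sm :: 's \<Rightarrow> 'e \<Rightarrow> 'e).
      cring S \<and> \<phi> \<in> ring_hom A S \<and> module S (with_smult E sm) \<and>
      (\<forall>a \<in> carrier A. \<forall>x \<in> carrier E. sm (\<phi> a) x = a \<odot>\<^bsub>E\<^esub> x) \<and>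
      fin_gen S (with_smult E sm))"

text \<open>Default: S ranges over rings on the type of self-maps of the carrier type of E
 (large enough, since S may be replaced by S modulo the annihilator of E, which embeds
 into the endomorphisms of E).\<close>
definition afg :: "('r, 'x) ring_scheme \<Rightarrow> ('r, 'e) module \<Rightarrow> bool" where
  "afg A E \<longleftrightarrow> afg_with TYPE('e \<Rightarrow> 'e) A E"

text \<open>Free abelian group on carrier E \<times> carrier T: finitely supported integer functions.\<close>
definition tensor_free :: "('r, 'e) module \<Rightarrow> ('t, 'y) ring_scheme \<Rightarrow> ('e \<times> 't \<Rightarrow> int) set" where
  "tensor_free E T = {g. finite {p. g p \<noteq> 0} \<and> {p. g p \<noteq> 0} \<subseteq> carrier E \<times> carrier T}"

definition delta :: "'a \<Rightarrow> 'a \<Rightarrow> int" where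
  "delta p = (\<lambda>q. if q = p then 1 else 0)"

inductive_set tensor_rel :: "('r, 'x) ring_scheme \<Rightarrow> ('r, 'e) module \<Rightarrow> ('t, 'y) ring_scheme
    \<Rightarrow> ('r \<Rightarrow> 't) \<Rightarrow> ('e \<times> 't \<Rightarrow> int) set"
  for R E T f where
  rel_zero: "(\<lambda>_. 0) \<in> tensor_rel R E T f"
| rel_addl: "\<lbrakk>e \<in> carrier E; e' \<in> carrier E; t \<in> carrier T\<rbrakk> \<Longrightarrow>
     (\<lambda>q. delta (e \<oplus>\<^bsub>E\<^esub> e', t) q - delta (e, t) q - delta (e', t) q) \<in> tensor_rel R E T f"
| rel_addr: "\<lbrakk>e \<in> carrier E; t \<in> carrier T; t' \<in> carrier T\<rbrakk> \<Longrightarrow>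
     (\<lambda>q. delta (e, t \<oplus>\<^bsub>T\<^esub> t') q - delta (e, t) q - delta (e, t') q) \<in> tensor_rel R E T f"
| rel_bal: "\<lbrakk>r \<in> carrier R; e \<in> carrier E; t \<in> carrier T\<rbrakk> \<Longrightarrow>
     (\<lambda>q. delta (r \<odot>\<^bsub>E\<^esub> e, t) q - delta (e, f r \<otimes>\<^bsub>T\<^esub> t) q) \<in> tensor_rel R E T f"
| rel_add: "\<lbrakk>g \<in> tensor_rel R E T f; h \<in> tensor_rel R E T f\<rbrakk> \<Longrightarrow>
     (\<lambda>q. g q + h q) \<in> tensor_rel R E T f"
| rel_neg: "g \<in> tensor_rel R E T f \<Longrightarrow> (\<lambda>q. - g q) \<in> tensor_rel R E T f"

definition tensor_cls :: "('r, 'x) ring_scheme \<Rightarrow> ('r, 'e) module \<Rightarrow> ('t, 'y) ring_scheme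
    \<Rightarrow> ('r \<Rightarrow> 't) \<Rightarrow> ('e \<times> 't \<Rightarrow> int) \<Rightarrow> ('e \<times> 't \<Rightarrow> int) set" where
  "tensor_cls R E T f g = {h \<in> tensor_free E T. (\<lambda>q. g q - h q) \<in> tensor_rel R E T f}"

definition tensor_rep :: "('e \<times> 't \<Rightarrow> int) set \<Rightarrow> ('e \<times> 't \<Rightarrow> int)" where
  "tensor_rep X = (SOME g. g \<in> X)"

text \<open>Action of t on the free group: (e, s) \<mapsto> (e, t s), extended additively.\<close>
definition tensor_act :: "('t, 'y) ring_scheme \<Rightarrow> 't \<Rightarrow> ('e \<times> 't \<Rightarrow> int) \<Rightarrow> ('e \<times> 't \<Rightarrow> int)" where
  "tensor_act T t g = (\<lambda>(e, s). \<Sum>u \<in> {u \<in> carrier T. t \<otimes>\<^bsub>T\<^esub> u = s \<and> g (e, u) \<noteq> 0}. g (e, u))"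

text \<open>E \<otimes>_R T as a T-module (the ring fields mult/one are irrelevant for modules).\<close>
definition base_change :: "('r, 'x) ring_scheme \<Rightarrow> ('r, 'e) module \<Rightarrow> ('t, 'y) ring_scheme
    \<Rightarrow> ('r \<Rightarrow> 't) \<Rightarrow> ('t, ('e \<times> 't \<Rightarrow> int) set) module" where
  "base_change R E T f =
    \<lparr>carrier = tensor_cls R E T f ` tensor_free E T,
     mult = (\<lambda>_ _. {}), one = {},
     zero = tensor_cls R E T f (\<lambda>_. 0),
     add = (\<lambda>X Y. tensor_cls R E T f (\<lambda>q. tensor_rep X q + tensor_rep Y q)),
     smult = (\<lambda>t X. tensor_cls R E T f (tensor_act T t (tensor_rep X)))\<rparr>"

end

theory Submission
  imports Defs
begin

definition supp :: "('a \<Rightarrow> int) \<Rightarrow> 'a set" where "supp g = {p. g p \<noteq> 0}"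

lemma supp_delta[simp]: "supp (delta p) = {p}" by (auto simp: supp_def delta_def)

lemma finite_supp_diff3:
  "supp (\<lambda>q. delta a q - delta b q - delta c q) \<subseteq> {a,b,c}"
  by (auto simp: supp_def delta_def)

lemma supp_neg[simp]: "supp (\<lambda>q. - g q) = supp g" by (simp add: supp_def)
lemma supp_zero[simp]: "supp (\<lambda>q. 0) = {}" by (simp add: supp_def)

locale tens = E: module R E + T: cring T
  for R :: "'r ring" and E :: "('r,'e) module" and T :: "'t ring" +
  fixes f :: "'r \<Rightarrow> 't"
  assumes hf: "f \<in> ring_hom R T"
begin

abbreviation "rel \<equiv> tensor_rel R E T f"
abbreviation "free \<equiv> tensor_free E T"
abbreviation "cls \<equiv> tensor_cls R E T f"
abbreviation "M \<equiv> base_change R E T f"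


lemma free_iff: "g \<in> free \<longleftrightarrow> finite (supp g) \<and> supp g \<subseteq> carrier E \<times> carrier T"
  by (simp add: tensor_free_def supp_def)

lemma free_diff3:
  assumes "a \<in> carrier E \<times> carrier T" "b \<in> carrier E \<times> carrier T" "c \<in> carrier E \<times> carrier T"
  shows "(\<lambda>q. delta a q - delta b q - delta c q) \<in> free"
proof -
  have "{a,b,c} \<subseteq> carrier E \<times> carrier T" using assms by auto
  hence "supp (\<lambda>q. delta a q - delta b q - delta c q) \<subseteq> carrier E \<times> carrier T"
    using finite_supp_diff3[of a b c] by (rule order_trans[rotated])
  moreover have "finite (supp (\<lambda>q. delta a q - delta b q - delta c q))"
    by (rule finite_subset[OF finite_supp_diff3]) simp
  ultimately show ?thesis unfolding free_iff by simp
qed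

lemma free_add: "g \<in> free \<Longrightarrow> h \<in> free \<Longrightarrow> (\<lambda>q. g q + h q) \<in> free"
proof -
  assume g: "g \<in> free" and h: "h \<in> free"
  have "supp (\<lambda>q. g q + h q) \<subseteq> supp g \<union> supp h" by (auto simp: supp_def)
  thus ?thesis using g h unfolding free_iff by (meson finite_Un le_sup_iff rev_finite_subset subset_trans)
qed


lemma free_neg: "g \<in> free \<Longrightarrow> (\<lambda>q. - g q) \<in> free" by (simp add: free_iff)
lemma free_zero: "(\<lambda>q. 0) \<in> free" by (simp add: free_iff)
lemma free_diff: "g \<in> free \<Longrightarrow> h \<in> free \<Longrightarrow> (\<lambda>q. g q - h q) \<in> free"
proof -
  assume g: "g \<in> free" and h: "h \<in> free"
  have "supp (\<lambda>q. g q - h q) \<subseteq> supp g \<union> supp h" by (auto simp: supp_def)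
  thus ?thesis using g h unfolding free_iff by (meson finite_Un le_sup_iff rev_finite_subset subset_trans)
qed
lemma free_delta: "p \<in> carrier E \<times> carrier T \<Longrightarrow> delta p \<in> free" by (simp add: free_iff)

lemma rel_free: "g \<in> rel \<Longrightarrow> g \<in> free"
proof (induction rule: tensor_rel.induct)
  case rel_zero then show ?case using free_zero by simp
next
  case (rel_addl e e' t) then show ?case
    by (intro free_diff3) auto
next
  case (rel_addr e t t') then show ?case
    by (intro free_diff3) auto
next
  case (rel_bal r e t) then show ?case
    by (intro free_diff free_delta) (auto simp: ring_hom_closed[OF hf])
next
  case (rel_add g h) then show ?case using free_add by blast
next
  case (rel_neg g) then show ?case using free_neg by blast
qed

lemma rel_addl': "e \<in> carrier E \<Longrightarrow> e' \<in> carrier E \<Longrightarrow> t \<in> carrier T \<Longrightarrow>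
   (\<lambda>q. delta (e \<oplus>\<^bsub>E\<^esub> e', t) q - delta (e, t) q - delta (e', t) q) \<in> rel"
  by (rule tensor_rel.rel_addl)
lemma rel_addr': "e \<in> carrier E \<Longrightarrow> t \<in> carrier T \<Longrightarrow> t' \<in> carrier T \<Longrightarrow>
   (\<lambda>q. delta (e, t \<oplus>\<^bsub>T\<^esub> t') q - delta (e, t) q - delta (e, t') q) \<in> rel"
  by (rule tensor_rel.rel_addr)
lemma rel_bal': "r \<in> carrier R \<Longrightarrow> e \<in> carrier E \<Longrightarrow> t \<in> carrier T \<Longrightarrow>
   (\<lambda>q. delta (r \<odot>\<^bsub>E\<^esub> e, t) q - delta (e, f r \<otimes>\<^bsub>T\<^esub> t) q) \<in> rel"
  by (rule tensor_rel.rel_bal)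

lemma rel_diff: "g \<in> rel \<Longrightarrow> h \<in> rel \<Longrightarrow> (\<lambda>q. g q - h q) \<in> rel"
proof -
  assume g: "g \<in> rel" and h: "h \<in> rel"
  from tensor_rel.rel_add[OF g tensor_rel.rel_neg[OF h]] show ?thesis by simp
qed

lemma rel_zero': "(\<lambda>q. g q - g q) \<in> rel" using tensor_rel.rel_zero by simp

lemma cls_eq_iff:
  assumes "g \<in> free" "h \<in> free"
  shows "cls g = cls h \<longleftrightarrow> (\<lambda>q. g q - h q) \<in> rel"
proof
  assume "cls g = cls h"
  moreover have "g \<in> cls g" using assms rel_zero' by (simp add: tensor_cls_def)
  ultimately have "(\<lambda>q. h q - g q) \<in> rel" by (simp add: tensor_cls_def)
  from tensor_rel.rel_neg[OF this] show "(\<lambda>q. g q - h q) \<in> rel" by simp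
next
  assume a: "(\<lambda>q. g q - h q) \<in> rel"
  show "cls g = cls h"
  proof (unfold tensor_cls_def, intro Collect_cong conj_cong refl iffI)
    fix k assume "(\<lambda>q. g q - k q) \<in> rel"
    from rel_diff[OF this a] show "(\<lambda>q. h q - k q) \<in> rel" by simp
  next
    fix k assume "(\<lambda>q. h q - k q) \<in> rel"
    from tensor_rel.rel_add[OF a this] show "(\<lambda>q. g q - k q) \<in> rel" by simp
  qed
qed

lemma self_in_cls: "g \<in> free \<Longrightarrow> g \<in> cls g"
  using rel_zero' by (simp add: tensor_cls_def)

lemma rep_cls:
  assumes "g \<in> free"
  shows "tensor_rep (cls g) \<in> free" "cls (tensor_rep (cls g)) = cls g"
proof -
  have "tensor_rep (cls g) \<in> cls g" unfolding tensor_rep_def using self_in_cls[OF assms] by (rule someI[where P="\<lambda>x. x \<in> cls g"])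
  hence r: "tensor_rep (cls g) \<in> free" "(\<lambda>q. g q - tensor_rep (cls g) q) \<in> rel"
    by (auto simp: tensor_cls_def)
  show "tensor_rep (cls g) \<in> free" by (rule r)
  show "cls (tensor_rep (cls g)) = cls g" using cls_eq_iff[OF assms r(1)] r(2) by simp
qed

lemma carrier_M: "carrier M = cls ` free" by (simp add: base_change_def)
lemma zero_M: "zero M = cls (\<lambda>_. 0)" by (simp add: base_change_def)

lemma add_cls:
  assumes "g \<in> free" "h \<in> free"
  shows "add M (cls g) (cls h) = cls (\<lambda>q. g q + h q)"
proof -
  let ?rg = "tensor_rep (cls g)" and ?rh = "tensor_rep (cls h)"
  have "add M (cls g) (cls h) = cls (\<lambda>q. ?rg q + ?rh q)" by (simp add: base_change_def)
  also have "\<dots> = cls (\<lambda>q. g q + h q)"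
  proof -
    have r1: "?rg \<in> free" "cls ?rg = cls g" using rep_cls[OF assms(1)] by auto
    have r2: "?rh \<in> free" "cls ?rh = cls h" using rep_cls[OF assms(2)] by auto
    have d1: "(\<lambda>q. ?rg q - g q) \<in> rel" using cls_eq_iff[OF r1(1) assms(1)] r1(2) by simp
    have d2: "(\<lambda>q. ?rh q - h q) \<in> rel" using cls_eq_iff[OF r2(1) assms(2)] r2(2) by simp
    have "(\<lambda>q. ?rg q + ?rh q - (g q + h q)) \<in> rel"
      using tensor_rel.rel_add[OF d1 d2] by (simp add: algebra_simps)
    thus ?thesis using cls_eq_iff[OF free_add[OF r1(1) r2(1)] free_add[OF assms]] by simp
  qed
  finally show ?thesis .
qed

lemma M_group:
  assumes "carrier N = carrier M" "add N = add M" "zero N = zero M"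
  shows "abelian_group N"
proof (rule abelian_groupI, unfold assms carrier_M)
  fix x y assume "x \<in> cls ` free" "y \<in> cls ` free"
  then obtain g h where "g \<in> free" "h \<in> free" "x = cls g" "y = cls h" by auto
  thus "add M x y \<in> cls ` free" using add_cls free_add by auto
next
  show "zero M \<in> cls ` free" using zero_M free_zero by auto
next
  fix x y z assume "x \<in> cls ` free" "y \<in> cls ` free" "z \<in> cls ` free"
  then obtain g h k where "g \<in> free" "h \<in> free" "k \<in> free" "x = cls g" "y = cls h" "z = cls k" by auto
  thus "add M (add M x y) z = add M x (add M y z)" using add_cls free_add by (simp add: add.assoc)
next
  fix x y assume "x \<in> cls ` free" "y \<in> cls ` free"
  then obtain g h where "g \<in> free" "h \<in> free" "x = cls g" "y = cls h" by auto
  thus "add M x y = add M y x" using add_cls free_add by (simp add: add.commute)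
next
  fix x assume "x \<in> cls ` free"
  then obtain g where "g \<in> free" "x = cls g" by auto
  thus "add M (zero M) x = x" using add_cls free_zero zero_M by simp
next
  fix x assume "x \<in> cls ` free"
  then obtain g where g: "g \<in> free" "x = cls g" by auto
  show "\<exists>y\<in>cls ` free. add M y x = zero M"
    by (rule bexI[of _ "cls (\<lambda>q. - g q)"]) (use g free_neg add_cls zero_M in auto)
qed

end

section \<open>push-forward\<close>

definition push :: "('a \<Rightarrow> 'b) \<Rightarrow> ('a \<Rightarrow> int) \<Rightarrow> ('b \<Rightarrow> int)" where
  "push \<phi> g = (\<lambda>q. \<Sum>p\<in>supp g. g p * delta (\<phi> p) q)"

lemma push_superset:
  assumes "finite S" "supp g \<subseteq> S"
  shows "push \<phi> g = (\<lambda>q. \<Sum>p\<in>S. g p * delta (\<phi> p) q)"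
  unfolding push_def
  by (rule ext, rule sum.mono_neutral_left) (use assms in \<open>auto simp: supp_def\<close>)

lemma repr:
  assumes "finite S" "supp g \<subseteq> S"
  shows "g = (\<lambda>q. \<Sum>p\<in>S. g p * delta p q)"
proof
  fix q
  have "(\<Sum>p\<in>S. g p * delta p q) = (\<Sum>p\<in>S. if q = p then g p else 0)"
    by (rule sum.cong) (auto simp: delta_def)
  also have "\<dots> = g q" using assms by (auto simp: supp_def)
  finally show "g q = (\<Sum>p\<in>S. g p * delta p q)" by simp
qed

lemma push_sum:
  assumes "finite S"
  shows "push \<phi> (\<lambda>q. \<Sum>p\<in>S. c p * delta (x p) q) = (\<lambda>q. \<Sum>p\<in>S. c p * delta (\<phi> (x p)) q)"
proof
  fix q
  let ?G = "\<lambda>q. \<Sum>p\<in>S. c p * delta (x p) q"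
  have "supp ?G \<subseteq> x ` S"
  proof
    fix r assume "r \<in> supp ?G"
    hence "(\<Sum>p\<in>S. c p * delta (x p) r) \<noteq> 0" by (simp add: supp_def)
    then obtain p where "p \<in> S" "c p * delta (x p) r \<noteq> 0" by (meson sum.neutral)
    thus "r \<in> x ` S" by (auto simp: delta_def split: if_splits)
  qed
  hence "push \<phi> ?G q = (\<Sum>r\<in>x ` S. ?G r * delta (\<phi> r) q)"
    using push_superset[of "x ` S" ?G \<phi>] assms by simp
  also have "\<dots> = (\<Sum>r\<in>x ` S. \<Sum>p\<in>S. c p * delta (x p) r * delta (\<phi> r) q)"
    by (simp add: sum_distrib_right)
  also have "\<dots> = (\<Sum>p\<in>S. \<Sum>r\<in>x ` S. c p * delta (x p) r * delta (\<phi> r) q)"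
    by (rule sum.swap)
  also have "\<dots> = (\<Sum>p\<in>S. c p * delta (\<phi> (x p)) q)"
  proof (rule sum.cong[OF refl])
    fix p assume p: "p \<in> S"
    have "(\<Sum>r\<in>x ` S. c p * delta (x p) r * delta (\<phi> r) q)
        = (\<Sum>r\<in>x ` S. if r = x p then c p * delta (\<phi> r) q else 0)"
      by (rule sum.cong) (auto simp: delta_def)
    also have "\<dots> = c p * delta (\<phi> (x p)) q" using assms p by simp
    finally show "(\<Sum>r\<in>x ` S. c p * delta (x p) r * delta (\<phi> r) q) = c p * delta (\<phi> (x p)) q" .
  qed
  finally show "push \<phi> ?G q = (\<Sum>p\<in>S. c p * delta (\<phi> (x p)) q)" .
qed

lemma supp_add_sub: "supp (\<lambda>q. g q + h q) \<subseteq> supp g \<union> supp h" by (auto simp: supp_def)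
lemma supp_diff_sub: "supp (\<lambda>q. g q - h q) \<subseteq> supp g \<union> supp h" by (auto simp: supp_def)

lemma push_add:
  assumes "finite (supp g)" "finite (supp h)"
  shows "push \<phi> (\<lambda>q. g q + h q) = (\<lambda>q. push \<phi> g q + push \<phi> h q)"
proof -
  let ?S = "supp g \<union> supp h"
  have "push \<phi> (\<lambda>q. g q + h q) = (\<lambda>q. \<Sum>p\<in>?S. (g p + h p) * delta (\<phi> p) q)"
    by (intro push_superset) (use supp_add_sub[of g h] assms in auto)
  also have "\<dots> = (\<lambda>q. (\<Sum>p\<in>?S. g p * delta (\<phi> p) q) + (\<Sum>p\<in>?S. h p * delta (\<phi> p) q))"
    by (simp add: distrib_right sum.distrib)
  also have "\<dots> = (\<lambda>q. push \<phi> g q + push \<phi> h q)"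
    using assms by (simp add: push_superset[of ?S g \<phi>] push_superset[of ?S h \<phi>])
  finally show ?thesis .
qed

lemma push_diff:
  assumes "finite (supp g)" "finite (supp h)"
  shows "push \<phi> (\<lambda>q. g q - h q) = (\<lambda>q. push \<phi> g q - push \<phi> h q)"
proof -
  let ?S = "supp g \<union> supp h"
  have "push \<phi> (\<lambda>q. g q - h q) = (\<lambda>q. \<Sum>p\<in>?S. (g p - h p) * delta (\<phi> p) q)"
    by (intro push_superset) (use supp_diff_sub[of g h] assms in auto)
  also have "\<dots> = (\<lambda>q. (\<Sum>p\<in>?S. g p * delta (\<phi> p) q) - (\<Sum>p\<in>?S. h p * delta (\<phi> p) q))"
    by (simp add: left_diff_distrib sum_subtractf)
  also have "\<dots> = (\<lambda>q. push \<phi> g q - push \<phi> h q)"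
    using assms by (simp add: push_superset[of ?S g \<phi>] push_superset[of ?S h \<phi>])
  finally show ?thesis .
qed

lemma push_neg: "push \<phi> (\<lambda>q. - g q) = (\<lambda>q. - push \<phi> g q)"
  by (simp add: push_def sum_negf)

lemma push_zero: "push \<phi> (\<lambda>q. 0) = (\<lambda>q. 0)"
  by (simp add: push_def)

lemma push_delta: "push \<phi> (delta a) = delta (\<phi> a)"
  unfolding push_def supp_delta by (simp add: delta_def)

lemma push_delta2: "push \<phi> (\<lambda>q. delta a q - delta b q) = (\<lambda>q. delta (\<phi> a) q - delta (\<phi> b) q)"
  by (subst push_diff) (auto simp: push_delta)

lemma push_delta3: "push \<phi> (\<lambda>q. delta a q - delta b q - delta c q)
   = (\<lambda>q. delta (\<phi> a) q - delta (\<phi> b) q - delta (\<phi> c) q)"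
proof -
  have "finite (supp (\<lambda>q. delta a q - delta b q))"
    by (rule finite_subset[OF supp_diff_sub]) simp
  thus ?thesis by (subst push_diff) (auto simp: push_delta2 push_delta)
qed

lemma push_comp:
  assumes "finite (supp g)"
  shows "push \<phi> (push \<psi> g) = push (\<phi> \<circ> \<psi>) g"
  using push_sum[OF assms, of \<phi> g \<psi>] by (simp add: push_def[of \<psi>] push_def[of "\<phi> \<circ> \<psi>"])

lemma push_cong: "(\<And>p. p \<in> supp g \<Longrightarrow> \<phi> p = \<psi> p) \<Longrightarrow> push \<phi> g = push \<psi> g"
  by (simp add: push_def)

lemma push_id: "finite (supp g) \<Longrightarrow> push (\<lambda>p. p) g = g"
  using repr[of "supp g" g] by (simp add: push_def)

lemma supp_push: "supp (push \<phi> g) \<subseteq> \<phi> ` supp g"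
proof
  fix q assume "q \<in> supp (push \<phi> g)"
  hence "(\<Sum>p\<in>supp g. g p * delta (\<phi> p) q) \<noteq> 0" by (simp add: supp_def push_def)
  then obtain p where "p \<in> supp g" "g p * delta (\<phi> p) q \<noteq> 0" by (meson sum.neutral)
  thus "q \<in> \<phi> ` supp g" by (auto simp: delta_def split: if_splits)
qed

context tens begin

lemma push_free:
  assumes "g \<in> free" "\<And>p. p \<in> carrier E \<times> carrier T \<Longrightarrow> \<phi> p \<in> carrier E \<times> carrier T"
  shows "push \<phi> g \<in> free"
proof -
  have s: "supp g \<subseteq> carrier E \<times> carrier T" "finite (supp g)" using assms(1) free_iff by auto
  have i: "\<phi> ` supp g \<subseteq> carrier E \<times> carrier T" using s(1) assms(2) by blast
  have f: "finite (supp (push \<phi> g))" by (rule finite_subset[OF supp_push finite_imageI[OF s(2)]])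
  have "supp (push \<phi> g) \<subseteq> carrier E \<times> carrier T" using supp_push[of \<phi> g] i by (rule order_trans)
  thus ?thesis using f free_iff by blast
qed

lemma rel_nat_scale: "g \<in> rel \<Longrightarrow> (\<lambda>q. int n * g q) \<in> rel"
proof (induction n)
  case 0 then show ?case using tensor_rel.rel_zero by simp
next
  case (Suc n)
  from tensor_rel.rel_add[OF Suc.IH[OF Suc.prems] Suc.prems] show ?case by (simp add: algebra_simps)
qed

lemma rel_scale: "g \<in> rel \<Longrightarrow> (\<lambda>q. k * g q) \<in> rel"
proof (cases "k \<ge> 0")
  case True
  then obtain n where "k = int n" by (metis nonneg_int_cases)
  thus "g \<in> rel \<Longrightarrow> ?thesis" using rel_nat_scale by simp
next
  case False
  hence "- k \<ge> 0" by simp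
  then obtain n where "- k = int n" by (metis nonneg_int_cases)
  hence "k = - int n" by simp
  thus "g \<in> rel \<Longrightarrow> ?thesis" using tensor_rel.rel_neg[OF rel_nat_scale, of g n] by simp
qed

lemma rel_sum: "finite S \<Longrightarrow> (\<And>p. p \<in> S \<Longrightarrow> r p \<in> rel) \<Longrightarrow> (\<lambda>q. \<Sum>p\<in>S. c p * r p q) \<in> rel"
proof (induction S rule: finite_induct)
  case empty then show ?case using tensor_rel.rel_zero by simp
next
  case (insert x F)
  from tensor_rel.rel_add[OF rel_scale[of "r x" "c x"] insert.IH] insert show ?case by simp
qed

lemma rel_finite: "g \<in> rel \<Longrightarrow> finite (supp g)"
  using rel_free free_iff by blast

lemma push_rel:
  assumes addl: "\<And>e e' t. e \<in> carrier E \<Longrightarrow> e' \<in> carrier E \<Longrightarrow> t \<in> carrier T \<Longrightarrow>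
      (\<lambda>q. delta (\<phi> (e \<oplus>\<^bsub>E\<^esub> e', t)) q - delta (\<phi> (e, t)) q - delta (\<phi> (e', t)) q) \<in> rel"
    and addr: "\<And>e t t'. e \<in> carrier E \<Longrightarrow> t \<in> carrier T \<Longrightarrow> t' \<in> carrier T \<Longrightarrow>
      (\<lambda>q. delta (\<phi> (e, t \<oplus>\<^bsub>T\<^esub> t')) q - delta (\<phi> (e, t)) q - delta (\<phi> (e, t')) q) \<in> rel"
    and bal: "\<And>r e t. r \<in> carrier R \<Longrightarrow> e \<in> carrier E \<Longrightarrow> t \<in> carrier T \<Longrightarrow>
      (\<lambda>q. delta (\<phi> (r \<odot>\<^bsub>E\<^esub> e, t)) q - delta (\<phi> (e, f r \<otimes>\<^bsub>T\<^esub> t)) q) \<in> rel"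
  shows "g \<in> rel \<Longrightarrow> push \<phi> g \<in> rel"
proof (induction rule: tensor_rel.induct)
  case rel_zero then show ?case using tensor_rel.rel_zero by (simp add: push_zero)
next
  case (rel_addl e e' t) then show ?case using addl by (simp add: push_delta3)
next
  case (rel_addr e t t') then show ?case using addr by (simp add: push_delta3)
next
  case (rel_bal r e t) then show ?case using bal by (simp add: push_delta2)
next
  case (rel_add g h) then show ?case
    using tensor_rel.rel_add[OF rel_add.IH] by (simp add: push_add rel_finite)
next
  case (rel_neg g) then show ?case
    using tensor_rel.rel_neg[OF rel_neg.IH] by (simp add: push_neg)
qed

end

definition extf :: "('c, 'x) ring_scheme \<Rightarrow> ('c \<Rightarrow> 'c) \<Rightarrow> ('c \<Rightarrow> 'c)" where
  "extf N F = (\<lambda>X. if X \<in> carrier N then F X else undefined)"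

definition addhom :: "('c, 'x) ring_scheme \<Rightarrow> ('c \<Rightarrow> 'c) \<Rightarrow> bool" where
  "addhom N F \<longleftrightarrow> F \<in> carrier N \<rightarrow> carrier N \<and>
     (\<forall>X\<in>carrier N. \<forall>Y\<in>carrier N. F (X \<oplus>\<^bsub>N\<^esub> Y) = F X \<oplus>\<^bsub>N\<^esub> F Y)"

definition commset :: "('c, 'x) ring_scheme \<Rightarrow> ('c \<Rightarrow> 'c) set \<Rightarrow> ('c \<Rightarrow> 'c) set" where
  "commset N Gen = {G. addhom N G \<and> (\<forall>A\<in>Gen. \<forall>X\<in>carrier N. G (A X) = A (G X))}"

definition bic :: "('c, 'x) ring_scheme \<Rightarrow> ('c \<Rightarrow> 'c) set \<Rightarrow> ('c \<Rightarrow> 'c) ring" where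
  "bic N Gen = \<lparr>carrier = {F. extf N F = F \<and> addhom N F \<and>
        (\<forall>G\<in>commset N Gen. \<forall>X\<in>carrier N. F (G X) = G (F X))},
     mult = (\<lambda>F G. extf N (\<lambda>X. F (G X))), one = extf N (\<lambda>X. X),
     zero = extf N (\<lambda>X. \<zero>\<^bsub>N\<^esub>), add = (\<lambda>F G. extf N (\<lambda>X. F X \<oplus>\<^bsub>N\<^esub> G X))\<rparr>"

lemma extf_in[simp]: "X \<in> carrier N \<Longrightarrow> extf N F X = F X" by (simp add: extf_def)
lemma extf_idem[simp]: "extf N (extf N F) = extf N F" by (auto simp: extf_def)
lemma extf_eq: "(\<And>X. X \<in> carrier N \<Longrightarrow> F X = G X) \<Longrightarrow> extf N F = extf N G"
  by (auto simp: extf_def)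

lemma bic_simps:
  "carrier (bic N Gen) = {F. extf N F = F \<and> addhom N F \<and>
        (\<forall>G\<in>commset N Gen. \<forall>X\<in>carrier N. F (G X) = G (F X))}"
  "mult (bic N Gen) = (\<lambda>F G. extf N (\<lambda>X. F (G X)))"
  "one (bic N Gen) = extf N (\<lambda>X. X)"
  "zero (bic N Gen) = extf N (\<lambda>X. \<zero>\<^bsub>N\<^esub>)"
  "add (bic N Gen) = (\<lambda>F G. extf N (\<lambda>X. F X \<oplus>\<^bsub>N\<^esub> G X))"
  by (simp_all add: bic_def)

lemma with_smult_simps[simp]:
  "carrier (with_smult M sm) = carrier M" "add (with_smult M sm) = add M"
  "zero (with_smult M sm) = zero M" "smult (with_smult M sm) = sm"
  "mult (with_smult M sm) = mult M" "one (with_smult M sm) = one M"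
  by (simp_all add: with_smult_def)

locale bicomm = abelian_group N for N :: "('c, 'x) ring_scheme" +
  fixes Gen :: "('c \<Rightarrow> 'c) set"
  assumes gen_hom: "A \<in> Gen \<Longrightarrow> addhom N A"
    and gen_comm: "A \<in> Gen \<Longrightarrow> B \<in> Gen \<Longrightarrow> X \<in> carrier N \<Longrightarrow> A (B X) = B (A X)"
begin

abbreviation "B \<equiv> bic N Gen"

lemma addhomD: "addhom N F \<Longrightarrow> X \<in> carrier N \<Longrightarrow> F X \<in> carrier N"
  "addhom N F \<Longrightarrow> X \<in> carrier N \<Longrightarrow> Y \<in> carrier N \<Longrightarrow> F (X \<oplus>\<^bsub>N\<^esub> Y) = F X \<oplus>\<^bsub>N\<^esub> F Y"
  by (auto simp: addhom_def)

lemma addhom_zero: "addhom N F \<Longrightarrow> F \<zero>\<^bsub>N\<^esub> = \<zero>\<^bsub>N\<^esub>"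
proof -
  assume h: "addhom N F"
  have "F \<zero>\<^bsub>N\<^esub> \<oplus>\<^bsub>N\<^esub> F \<zero>\<^bsub>N\<^esub> = F \<zero>\<^bsub>N\<^esub>"
    using addhomD(2)[OF h, of "\<zero>\<^bsub>N\<^esub>" "\<zero>\<^bsub>N\<^esub>"] by simp
  thus ?thesis using addhomD(1)[OF h zero_closed] by simp
qed

lemma addhom_neg: "addhom N F \<Longrightarrow> X \<in> carrier N \<Longrightarrow> F (\<ominus>\<^bsub>N\<^esub> X) = \<ominus>\<^bsub>N\<^esub> F X"
proof -
  assume h: "addhom N F" and X: "X \<in> carrier N"
  have "F (\<ominus>\<^bsub>N\<^esub> X) \<oplus>\<^bsub>N\<^esub> F X = \<zero>\<^bsub>N\<^esub>"
    using addhomD(2)[OF h, of "\<ominus>\<^bsub>N\<^esub> X" X] X addhom_zero[OF h] by (simp add: l_neg)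
  thus ?thesis using minus_equality addhomD(1)[OF h] X by (metis a_inv_closed)
qed

lemma carrier_B_iff: "F \<in> carrier B \<longleftrightarrow> extf N F = F \<and> addhom N F \<and>
        (\<forall>G\<in>commset N Gen. \<forall>X\<in>carrier N. F (G X) = G (F X))"
  by (simp add: bic_simps)

lemma addhom_extf: "addhom N F \<Longrightarrow> addhom N (extf N F)"
  by (auto simp: addhom_def)

lemma gen_commset: "A \<in> Gen \<Longrightarrow> A \<in> commset N Gen"
  using gen_hom gen_comm by (auto simp: commset_def)

lemma commset_closed: "G \<in> commset N Gen \<Longrightarrow> X \<in> carrier N \<Longrightarrow> G X \<in> carrier N"
  by (auto simp: commset_def addhom_def)

lemma commset_D: "G \<in> commset N Gen \<Longrightarrow> addhom N G" by (simp add: commset_def)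

lemma B_intro:
  assumes "addhom N F" "\<And>G X. G \<in> commset N Gen \<Longrightarrow> X \<in> carrier N \<Longrightarrow> F (G X) = G (F X)"
  shows "extf N F \<in> carrier B"
  unfolding carrier_B_iff
proof (intro conjI ballI)
  show "extf N (extf N F) = extf N F" by simp
  show "addhom N (extf N F)" using addhom_extf[OF assms(1)] .
  fix G X assume G: "G \<in> commset N Gen" and X: "X \<in> carrier N"
  show "extf N F (G X) = G (extf N F X)"
    using commset_closed[OF G X] X assms(2)[OF G X] by simp
qed

lemma gen_in_B: "A \<in> Gen \<Longrightarrow> extf N A \<in> carrier B"
proof (rule B_intro)
  assume A: "A \<in> Gen"
  show "addhom N A" using gen_hom[OF A] .
  fix G X assume "G \<in> commset N Gen" "X \<in> carrier N"
  thus "A (G X) = G (A X)" using A by (simp add: commset_def)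
qed

lemma B_D: "F \<in> carrier B \<Longrightarrow> addhom N F" "F \<in> carrier B \<Longrightarrow> extf N F = F"
  "F \<in> carrier B \<Longrightarrow> G \<in> commset N Gen \<Longrightarrow> X \<in> carrier N \<Longrightarrow> F (G X) = G (F X)"
  by (auto simp: carrier_B_iff)

lemma B_commset: "F \<in> carrier B \<Longrightarrow> F \<in> commset N Gen"
proof -
  assume F: "F \<in> carrier B"
  have "\<forall>A\<in>Gen. \<forall>X\<in>carrier N. F (A X) = A (F X)" using B_D(3)[OF F gen_commset] by blast
  thus ?thesis using B_D(1)[OF F] by (simp add: commset_def)
qed

lemma B_closedN: "F \<in> carrier B \<Longrightarrow> X \<in> carrier N \<Longrightarrow> F X \<in> carrier N"
  using B_D(1) addhomD(1) by blast

lemma add_B_closed: "F \<in> carrier B \<Longrightarrow> G \<in> carrier B \<Longrightarrow> add B F G \<in> carrier B"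
  unfolding bic_simps(2-5)
proof (rule B_intro)
  assume F: "F \<in> carrier B" and G: "G \<in> carrier B"
  note hF = B_D(1)[OF F] and hG = B_D(1)[OF G]
  show "addhom N (\<lambda>X. F X \<oplus>\<^bsub>N\<^esub> G X)"
    unfolding addhom_def using addhomD[OF hF] addhomD[OF hG] by (auto simp: a_ac)
  fix H X assume H: "H \<in> commset N Gen" and X: "X \<in> carrier N"
  have "H (F X \<oplus>\<^bsub>N\<^esub> G X) = H (F X) \<oplus>\<^bsub>N\<^esub> H (G X)"
    using addhomD(2)[OF commset_D[OF H]] addhomD(1)[OF hF X] addhomD(1)[OF hG X] by blast
  thus "F (H X) \<oplus>\<^bsub>N\<^esub> G (H X) = H (F X \<oplus>\<^bsub>N\<^esub> G X)"
    using B_D(3)[OF F H X] B_D(3)[OF G H X] by simp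
qed

lemma zero_B_closed: "zero B \<in> carrier B"
  unfolding bic_simps(2-5)
proof (rule B_intro)
  show "addhom N (\<lambda>X. \<zero>\<^bsub>N\<^esub>)" by (simp add: addhom_def)
  fix H X assume H: "H \<in> commset N Gen" and X: "X \<in> carrier N"
  show "\<zero>\<^bsub>N\<^esub> = H \<zero>\<^bsub>N\<^esub>" using addhom_zero[OF commset_D[OF H]] by simp
qed

lemma neg_B_closed: "F \<in> carrier B \<Longrightarrow> extf N (\<lambda>X. \<ominus>\<^bsub>N\<^esub> F X) \<in> carrier B"
proof (rule B_intro)
  assume F: "F \<in> carrier B"
  note hF = B_D(1)[OF F]
  show "addhom N (\<lambda>X. \<ominus>\<^bsub>N\<^esub> F X)"
    unfolding addhom_def using addhomD[OF hF] by (auto simp: minus_add a_comm)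
  fix H X assume H: "H \<in> commset N Gen" and X: "X \<in> carrier N"
  show "\<ominus>\<^bsub>N\<^esub> F (H X) = H (\<ominus>\<^bsub>N\<^esub> F X)"
    using B_D(3)[OF F H X] addhom_neg[OF commset_D[OF H] addhomD(1)[OF hF X]] by simp
qed

lemma mult_B_closed: "F \<in> carrier B \<Longrightarrow> G \<in> carrier B \<Longrightarrow> mult B F G \<in> carrier B"
  unfolding bic_simps(2-5)
proof (rule B_intro)
  assume F: "F \<in> carrier B" and G: "G \<in> carrier B"
  note hF = B_D(1)[OF F] and hG = B_D(1)[OF G]
  show "addhom N (\<lambda>X. F (G X))"
    unfolding addhom_def using addhomD[OF hF] addhomD[OF hG] by auto
  fix H X assume H: "H \<in> commset N Gen" and X: "X \<in> carrier N"
  show "F (G (H X)) = H (F (G X))"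
    using B_D(3)[OF F H addhomD(1)[OF hG X]] B_D(3)[OF G H X] by simp
qed

lemma one_B_closed: "one B \<in> carrier B"
  unfolding bic_simps(2-5)
  by (rule B_intro) (simp_all add: addhom_def)

lemma B_comm: "F \<in> carrier B \<Longrightarrow> G \<in> carrier B \<Longrightarrow> X \<in> carrier N \<Longrightarrow> F (G X) = G (F X)"
  using B_D(3) B_commset by blast

lemma B_cring: "cring B"
proof (rule cringI)
  show "abelian_group B"
  proof (rule abelian_groupI)
    fix x y assume "x \<in> carrier B" "y \<in> carrier B"
    thus "x \<oplus>\<^bsub>B\<^esub> y \<in> carrier B" by (rule add_B_closed)
  next
    show "\<zero>\<^bsub>B\<^esub> \<in> carrier B" by (rule zero_B_closed)
  next
    fix x y z assume a: "x \<in> carrier B" "y \<in> carrier B" "z \<in> carrier B"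
    show "x \<oplus>\<^bsub>B\<^esub> y \<oplus>\<^bsub>B\<^esub> z = x \<oplus>\<^bsub>B\<^esub> (y \<oplus>\<^bsub>B\<^esub> z)"
      unfolding bic_simps by (rule extf_eq) (use a B_closedN in \<open>simp add: a_assoc\<close>)
  next
    fix x y assume a: "x \<in> carrier B" "y \<in> carrier B"
    show "x \<oplus>\<^bsub>B\<^esub> y = y \<oplus>\<^bsub>B\<^esub> x"
      unfolding bic_simps by (rule extf_eq) (use a B_closedN in \<open>simp add: a_comm\<close>)
  next
    fix x assume a: "x \<in> carrier B"
    show "\<zero>\<^bsub>B\<^esub> \<oplus>\<^bsub>B\<^esub> x = x"
      unfolding bic_simps using B_D(2)[OF a] extf_eq[of N "\<lambda>X. extf N (\<lambda>X. \<zero>\<^bsub>N\<^esub>) X \<oplus>\<^bsub>N\<^esub> x X" x]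
        B_closedN[OF a] by simp
  next
    fix x assume a: "x \<in> carrier B"
    show "\<exists>y\<in>carrier B. y \<oplus>\<^bsub>B\<^esub> x = \<zero>\<^bsub>B\<^esub>"
    proof (rule bexI[OF _ neg_B_closed[OF a]])
      show "extf N (\<lambda>X. \<ominus>\<^bsub>N\<^esub> x X) \<oplus>\<^bsub>B\<^esub> x = \<zero>\<^bsub>B\<^esub>"
        unfolding bic_simps by (rule extf_eq) (use a B_closedN in \<open>simp add: l_neg\<close>)
    qed
  qed
next
  show "comm_monoid B"
  proof (rule comm_monoidI)
    fix x y assume "x \<in> carrier B" "y \<in> carrier B"
    thus "x \<otimes>\<^bsub>B\<^esub> y \<in> carrier B" by (rule mult_B_closed)
  next
    show "\<one>\<^bsub>B\<^esub> \<in> carrier B" by (rule one_B_closed)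
  next
    fix x y z assume a: "x \<in> carrier B" "y \<in> carrier B" "z \<in> carrier B"
    show "x \<otimes>\<^bsub>B\<^esub> y \<otimes>\<^bsub>B\<^esub> z = x \<otimes>\<^bsub>B\<^esub> (y \<otimes>\<^bsub>B\<^esub> z)"
      unfolding bic_simps by (rule extf_eq) (use a B_closedN in simp)
  next
    fix x assume a: "x \<in> carrier B"
    show "\<one>\<^bsub>B\<^esub> \<otimes>\<^bsub>B\<^esub> x = x"
      unfolding bic_simps using B_D(2)[OF a] extf_eq[of N "\<lambda>X. extf N (\<lambda>X. X) (x X)" x]
        B_closedN[OF a] by simp
  next
    fix x y assume a: "x \<in> carrier B" "y \<in> carrier B"
    show "x \<otimes>\<^bsub>B\<^esub> y = y \<otimes>\<^bsub>B\<^esub> x"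
      unfolding bic_simps by (rule extf_eq) (use a B_comm in simp)
  qed
next
  fix x y z assume a: "x \<in> carrier B" "y \<in> carrier B" "z \<in> carrier B"
  show "(x \<oplus>\<^bsub>B\<^esub> y) \<otimes>\<^bsub>B\<^esub> z = x \<otimes>\<^bsub>B\<^esub> z \<oplus>\<^bsub>B\<^esub> y \<otimes>\<^bsub>B\<^esub> z"
    unfolding bic_simps by (rule extf_eq) (use a B_closedN in simp)
qed

end

lemma bic_module:
  fixes N :: "('r, 'c) module"
  assumes "bicomm N Gen"
  shows "module (bic N Gen) (with_smult N (\<lambda>F X. F X))"
proof -
  interpret bicomm N Gen by (rule assms)
  have ag: "abelian_group (with_smult N (\<lambda>F X. F X))"
  proof (rule abelian_groupI)
    fix x assume "x \<in> carrier (with_smult N (\<lambda>F X. F X))"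
    hence x: "x \<in> carrier N" by simp
    show "\<exists>y\<in>carrier (with_smult N (\<lambda>F X. F X)). y \<oplus>\<^bsub>with_smult N (\<lambda>F X. F X)\<^esub> x = \<zero>\<^bsub>with_smult N (\<lambda>F X. F X)\<^esub>"
      by (rule bexI[of _ "\<ominus>\<^bsub>N\<^esub> x"]) (simp_all add: l_neg x)
  qed (simp_all add: a_ac)
  show ?thesis
  proof (rule moduleI[OF B_cring ag], simp_all)
    fix a x assume "a \<in> carrier B" "x \<in> carrier N"
    thus "a x \<in> carrier N" by (rule B_closedN)
  next
    fix a b x assume "a \<in> carrier B" "b \<in> carrier B" "x \<in> carrier N"
    thus "(a \<oplus>\<^bsub>B\<^esub> b) x = a x \<oplus>\<^bsub>N\<^esub> b x" by (simp add: bic_simps)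
  next
    fix a x y assume "a \<in> carrier B" "x \<in> carrier N" "y \<in> carrier N"
    thus "a (x \<oplus>\<^bsub>N\<^esub> y) = a x \<oplus>\<^bsub>N\<^esub> a y" using B_D(1) addhomD(2) by blast
  next
    fix a b x assume "a \<in> carrier B" "b \<in> carrier B" "x \<in> carrier N"
    thus "(a \<otimes>\<^bsub>B\<^esub> b) x = a (b x)" by (simp add: bic_simps)
  next
    fix x assume "x \<in> carrier N"
    thus "\<one>\<^bsub>B\<^esub> x = x" by (simp add: bic_simps)
  qed
qed

definition spanof :: "('s, 'x) ring_scheme \<Rightarrow> ('s, 'e, 'z) module_scheme \<Rightarrow> 'e set \<Rightarrow> 'e set" where
  "spanof K N X0 = {x. \<exists>a \<in> X0 \<rightarrow> carrier K. x = finsum N (\<lambda>v. a v \<odot>\<^bsub>N\<^esub> v) X0}"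

context module begin

lemma span_zero: "finite X0 \<Longrightarrow> X0 \<subseteq> carrier M \<Longrightarrow> \<zero>\<^bsub>M\<^esub> \<in> spanof R M X0"
proof -
  assume X0: "finite X0" "X0 \<subseteq> carrier M"
  have "finsum M (\<lambda>v. \<zero> \<odot>\<^bsub>M\<^esub> v) X0 = finsum M (\<lambda>v. \<zero>\<^bsub>M\<^esub>) X0"
    using X0 by (intro M.finsum_cong') auto
  also have "\<dots> = \<zero>\<^bsub>M\<^esub>" by (rule M.finsum_zero)
  finally have eq: "\<zero>\<^bsub>M\<^esub> = finsum M (\<lambda>v. \<zero> \<odot>\<^bsub>M\<^esub> v) X0" by simp
  show ?thesis unfolding spanof_def by (rule CollectI, rule bexI[of _ "\<lambda>_. \<zero>"]) (use eq in auto)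
qed

lemma span_carrier: "finite X0 \<Longrightarrow> X0 \<subseteq> carrier M \<Longrightarrow> x \<in> spanof R M X0 \<Longrightarrow> x \<in> carrier M"
  unfolding spanof_def by (auto intro!: M.finsum_closed)

lemma span_add: "finite X0 \<Longrightarrow> X0 \<subseteq> carrier M \<Longrightarrow> x \<in> spanof R M X0 \<Longrightarrow> y \<in> spanof R M X0
   \<Longrightarrow> x \<oplus>\<^bsub>M\<^esub> y \<in> spanof R M X0"
proof -
  assume X0: "finite X0" "X0 \<subseteq> carrier M" and "x \<in> spanof R M X0" "y \<in> spanof R M X0"
  then obtain a b where a: "a \<in> X0 \<rightarrow> carrier R" "x = finsum M (\<lambda>v. a v \<odot>\<^bsub>M\<^esub> v) X0"
    and b: "b \<in> X0 \<rightarrow> carrier R" "y = finsum M (\<lambda>v. b v \<odot>\<^bsub>M\<^esub> v) X0"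
    unfolding spanof_def by auto
  have "x \<oplus>\<^bsub>M\<^esub> y = finsum M (\<lambda>v. a v \<odot>\<^bsub>M\<^esub> v \<oplus>\<^bsub>M\<^esub> b v \<odot>\<^bsub>M\<^esub> v) X0"
    using a b X0 by (subst M.finsum_addf) (auto simp: Pi_def subset_iff)
  also have "\<dots> = finsum M (\<lambda>v. (a v \<oplus> b v) \<odot>\<^bsub>M\<^esub> v) X0"
    using a b X0 by (intro M.finsum_cong') (auto simp: Pi_def subset_iff smult_l_distr)
  finally have eq: "x \<oplus>\<^bsub>M\<^esub> y = finsum M (\<lambda>v. (a v \<oplus> b v) \<odot>\<^bsub>M\<^esub> v) X0" .
  show ?thesis unfolding spanof_def
    by (rule CollectI, rule bexI[of _ "\<lambda>v. a v \<oplus> b v"]) (use eq a b in auto)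
qed

lemma span_smult: "finite X0 \<Longrightarrow> X0 \<subseteq> carrier M \<Longrightarrow> c \<in> carrier R \<Longrightarrow> x \<in> spanof R M X0
   \<Longrightarrow> c \<odot>\<^bsub>M\<^esub> x \<in> spanof R M X0"
proof -
  assume X0: "finite X0" "X0 \<subseteq> carrier M" and c: "c \<in> carrier R" and "x \<in> spanof R M X0"
  then obtain a where a: "a \<in> X0 \<rightarrow> carrier R" "x = finsum M (\<lambda>v. a v \<odot>\<^bsub>M\<^esub> v) X0"
    unfolding spanof_def by auto
  have "c \<odot>\<^bsub>M\<^esub> x = finsum M (\<lambda>v. c \<odot>\<^bsub>M\<^esub> (a v \<odot>\<^bsub>M\<^esub> v)) X0"
    unfolding a(2) by (rule finsum_smult_ldistr) (use X0 a c in auto)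
  also have "\<dots> = finsum M (\<lambda>v. (c \<otimes> a v) \<odot>\<^bsub>M\<^esub> v) X0"
    using a X0 c by (intro M.finsum_cong') (auto simp: Pi_def subset_iff smult_assoc1)
  finally have eq: "c \<odot>\<^bsub>M\<^esub> x = finsum M (\<lambda>v. (c \<otimes> a v) \<odot>\<^bsub>M\<^esub> v) X0" .
  show ?thesis unfolding spanof_def
    by (rule CollectI, rule bexI[of _ "\<lambda>v. c \<otimes> a v"]) (use eq a c in auto)
qed

lemma span_gen: "finite X0 \<Longrightarrow> X0 \<subseteq> carrier M \<Longrightarrow> v \<in> X0 \<Longrightarrow> v \<in> spanof R M X0"
proof -
  assume X0: "finite X0" "X0 \<subseteq> carrier M" and v: "v \<in> X0"
  let ?a = "\<lambda>w. if v = w then \<one> else \<zero>"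
  have "finsum M (\<lambda>w. ?a w \<odot>\<^bsub>M\<^esub> w) X0 = finsum M (\<lambda>w. if v = w then w else \<zero>\<^bsub>M\<^esub>) X0"
    using X0 by (intro M.finsum_cong') (auto simp: subset_iff)
  also have "\<dots> = v" using X0 v by (intro M.finsum_singleton) auto
  finally show ?thesis unfolding spanof_def by (intro CollectI bexI[of _ ?a]) auto
qed

lemma span_neg: "finite X0 \<Longrightarrow> X0 \<subseteq> carrier M \<Longrightarrow> x \<in> spanof R M X0
   \<Longrightarrow> \<ominus>\<^bsub>M\<^esub> x \<in> spanof R M X0"
proof -
  assume X0: "finite X0" "X0 \<subseteq> carrier M" and x: "x \<in> spanof R M X0"
  have "\<ominus>\<^bsub>M\<^esub> x = (\<ominus> \<one>) \<odot>\<^bsub>M\<^esub> x"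
    using smult_l_minus[of \<one> x] span_carrier[OF X0 x] by simp
  thus ?thesis using span_smult[OF X0 _ x, of "\<ominus> \<one>"] by simp
qed

end

context tens begin

definition goodmap :: "('e \<times> 't \<Rightarrow> 'e \<times> 't) \<Rightarrow> bool" where
  "goodmap \<phi> \<longleftrightarrow> (\<forall>p\<in>carrier E \<times> carrier T. \<phi> p \<in> carrier E \<times> carrier T) \<and> (\<forall>g\<in>rel. push \<phi> g \<in> rel)"

definition Op :: "('e \<times> 't \<Rightarrow> 'e \<times> 't) \<Rightarrow> ('e \<times> 't \<Rightarrow> int) set \<Rightarrow> ('e \<times> 't \<Rightarrow> int) set" where
  "Op \<phi> = extf M (\<lambda>X. cls (push \<phi> (tensor_rep X)))"

lemma free_finite: "g \<in> free \<Longrightarrow> finite (supp g)" by (simp add: free_iff)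

lemma goodmap_free: "goodmap \<phi> \<Longrightarrow> g \<in> free \<Longrightarrow> push \<phi> g \<in> free"
  by (rule push_free) (auto simp: goodmap_def)

lemma cls_in: "g \<in> free \<Longrightarrow> cls g \<in> carrier M" by (simp add: carrier_M)

lemma carrier_M_E: "X \<in> carrier M \<Longrightarrow> tensor_rep X \<in> free \<and> X = cls (tensor_rep X)"
  using rep_cls carrier_M by auto

lemma Op_cls: assumes "goodmap \<phi>" "g \<in> free" shows "Op \<phi> (cls g) = cls (push \<phi> g)"
proof -
  let ?r = "tensor_rep (cls g)"
  have r: "?r \<in> free" "cls ?r = cls g" using rep_cls assms by auto
  hence "(\<lambda>q. ?r q - g q) \<in> rel" using cls_eq_iff assms by auto
  hence "push \<phi> (\<lambda>q. ?r q - g q) \<in> rel" using assms(1) by (auto simp: goodmap_def)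
  hence "(\<lambda>q. push \<phi> ?r q - push \<phi> g q) \<in> rel"
    using push_diff[of ?r g \<phi>] free_finite r assms by simp
  hence "cls (push \<phi> ?r) = cls (push \<phi> g)"
    using cls_eq_iff goodmap_free r assms by auto
  thus ?thesis using cls_in[OF assms(2)] by (simp add: Op_def)
qed

lemma Op_closed: "goodmap \<phi> \<Longrightarrow> X \<in> carrier M \<Longrightarrow> Op \<phi> X \<in> carrier M"
  using carrier_M_E Op_cls goodmap_free cls_in by metis

lemma Op_addhom: assumes "goodmap \<phi>" shows "addhom M (Op \<phi>)"
  unfolding addhom_def
proof (intro conjI ballI Pi_I)
  fix X assume "X \<in> carrier M" thus "Op \<phi> X \<in> carrier M" using Op_closed assms by blast
next
  fix X Y assume "X \<in> carrier M" "Y \<in> carrier M"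
  then obtain g h where gh: "g \<in> free" "h \<in> free" "X = cls g" "Y = cls h" using carrier_M by auto
  have "Op \<phi> (X \<oplus>\<^bsub>M\<^esub> Y) = cls (push \<phi> (\<lambda>q. g q + h q))"
    using gh add_cls Op_cls[OF assms] free_add by simp
  also have "\<dots> = cls (\<lambda>q. push \<phi> g q + push \<phi> h q)"
    by (simp only: push_add[OF free_finite[OF gh(1)] free_finite[OF gh(2)]])
  also have "\<dots> = Op \<phi> X \<oplus>\<^bsub>M\<^esub> Op \<phi> Y"
    using gh add_cls Op_cls[OF assms] goodmap_free[OF assms] by simp
  finally show "Op \<phi> (X \<oplus>\<^bsub>M\<^esub> Y) = Op \<phi> X \<oplus>\<^bsub>M\<^esub> Op \<phi> Y" .
qed

lemma Op_comp: "goodmap \<phi> \<Longrightarrow> goodmap \<psi> \<Longrightarrow> g \<in> free \<Longrightarrow> Op \<phi> (Op \<psi> (cls g)) = cls (push (\<phi> \<circ> \<psi>) g)"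
proof -
  assume a: "goodmap \<phi>" "goodmap \<psi>" "g \<in> free"
  have "Op \<psi> (cls g) = cls (push \<psi> g)" using Op_cls a by blast
  moreover have "Op \<phi> (cls (push \<psi> g)) = cls (push \<phi> (push \<psi> g))"
    using Op_cls[OF a(1) goodmap_free[OF a(2) a(3)]] .
  moreover have "push \<phi> (push \<psi> g) = push (\<phi> \<circ> \<psi>) g" by (rule push_comp[OF free_finite[OF a(3)]])
  ultimately show ?thesis by (simp only:)
qed

lemma Op_commute:
  assumes "goodmap \<phi>" "goodmap \<psi>" "\<And>p. p \<in> carrier E \<times> carrier T \<Longrightarrow> \<phi> (\<psi> p) = \<psi> (\<phi> p)"
    "X \<in> carrier M"
  shows "Op \<phi> (Op \<psi> X) = Op \<psi> (Op \<phi> X)"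
proof -
  obtain g where g: "g \<in> free" "X = cls g" using assms(4) carrier_M by auto
  have "push (\<phi> \<circ> \<psi>) g = push (\<psi> \<circ> \<phi>) g"
    using g assms(3) by (intro push_cong) (auto simp: free_iff)
  thus ?thesis using Op_comp assms g by metis
qed

lemma Op_ext: "extf M (Op \<phi>) = Op \<phi>" by (simp add: Op_def)

lemma tensor_act_push:
  assumes "g \<in> free" "t \<in> carrier T"
  shows "tensor_act T t g = push (\<lambda>(e, u). (e, t \<otimes>\<^bsub>T\<^esub> u)) g"
proof (rule ext, clarify)
  fix e s
  let ?U = "{u \<in> carrier T. t \<otimes>\<^bsub>T\<^esub> u = s \<and> g (e, u) \<noteq> 0}"
  have sub: "supp g \<subseteq> carrier E \<times> carrier T" "finite (supp g)" using assms by (auto simp: free_iff)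
  have "push (\<lambda>(e, u). (e, t \<otimes>\<^bsub>T\<^esub> u)) g (e, s)
      = (\<Sum>p\<in>supp g. if fst p = e \<and> t \<otimes>\<^bsub>T\<^esub> snd p = s then g p else 0)"
    unfolding push_def by (rule sum.cong) (auto simp: delta_def)
  also have "\<dots> = (\<Sum>p\<in>{p\<in>supp g. fst p = e \<and> t \<otimes>\<^bsub>T\<^esub> snd p = s}. g p)"
    using sub by (simp add: sum.inter_filter)
  also have "{p\<in>supp g. fst p = e \<and> t \<otimes>\<^bsub>T\<^esub> snd p = s} = (\<lambda>u. (e, u)) ` ?U"
    using sub by (auto simp: supp_def)
  also have "(\<Sum>p\<in>(\<lambda>u. (e, u)) ` ?U. g p) = (\<Sum>u\<in>?U. g (e, u))"
    by (rule sum.reindex_cong[of "\<lambda>u. (e, u)"]) (auto simp: inj_on_def)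
  finally show "tensor_act T t g (e, s) = push (\<lambda>(e, u). (e, t \<otimes>\<^bsub>T\<^esub> u)) g (e, s)"
    by (simp add: tensor_act_def)
qed

lemma cls_delta_add:
  assumes "e1 \<in> carrier E" "e2 \<in> carrier E" "t \<in> carrier T"
  shows "cls (delta (e1 \<oplus>\<^bsub>E\<^esub> e2, t)) = cls (delta (e1, t)) \<oplus>\<^bsub>M\<^esub> cls (delta (e2, t))"
proof -
  have "cls (delta (e1 \<oplus>\<^bsub>E\<^esub> e2, t)) = cls (\<lambda>q. delta (e1, t) q + delta (e2, t) q)"
    using assms tensor_rel.rel_addl[OF assms]
    by (subst cls_eq_iff) (auto intro!: free_delta free_add simp: algebra_simps)
  thus ?thesis using add_cls free_delta assms by simp
qed

lemma cls_delta_zero: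
  assumes "t \<in> carrier T"
  shows "cls (delta (\<zero>\<^bsub>E\<^esub>, t)) = \<zero>\<^bsub>M\<^esub>"
proof -
  have "(\<lambda>q. - delta (\<zero>\<^bsub>E\<^esub>, t) q) \<in> rel"
    using rel_addl'[of "\<zero>\<^bsub>E\<^esub>" "\<zero>\<^bsub>E\<^esub>" t] assms by simp
  from tensor_rel.rel_neg[OF this] have "(\<lambda>q. delta (\<zero>\<^bsub>E\<^esub>, t) q - 0) \<in> rel" by simp
  thus ?thesis using cls_eq_iff free_delta free_zero zero_M assms by auto
qed

lemma free_lincomb:
  assumes "finite S0" "S0 \<subseteq> carrier E \<times> carrier T"
  shows "(\<lambda>q. \<Sum>p\<in>S0. c p * delta p q) \<in> free"
proof -
  have "supp (\<lambda>q. \<Sum>p\<in>S0. c p * delta p q) \<subseteq> S0"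
  proof
    fix r assume "r \<in> supp (\<lambda>q. \<Sum>p\<in>S0. c p * delta p q)"
    hence "(\<Sum>p\<in>S0. c p * delta p r) \<noteq> 0" by (simp add: supp_def)
    then obtain p where "p \<in> S0" "c p * delta p r \<noteq> 0" by (meson sum.neutral)
    thus "r \<in> S0" by (auto simp: delta_def split: if_splits)
  qed
  thus ?thesis using assms unfolding free_iff by (meson finite_subset subset_trans)
qed

lemma free_scale: "g \<in> free \<Longrightarrow> (\<lambda>q. k * g q) \<in> free"
  unfolding free_iff by (metis (mono_tags, lifting) mem_Collect_eq mult_eq_0_iff rev_finite_subset subset_iff supp_def)

end

locale tens2 = tens R E T f + S: cring S
  for R :: "'r ring" and E :: "('r,'e) module" and T :: "'t ring" and f and S :: "'s ring" +
  fixes \<phi>0 :: "'r \<Rightarrow> 's" and sm0 :: "'s \<Rightarrow> 'e \<Rightarrow> 'e"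
  assumes hphi: "\<phi>0 \<in> ring_hom R S" and mES: "module S (with_smult E sm0)"
    and compat: "\<And>a x. a \<in> carrier R \<Longrightarrow> x \<in> carrier E \<Longrightarrow> sm0 (\<phi>0 a) x = a \<odot>\<^bsub>E\<^esub> x"
begin

lemma sm_closed: "s \<in> carrier S \<Longrightarrow> e \<in> carrier E \<Longrightarrow> sm0 s e \<in> carrier E"
  using module.smult_closed[OF mES] by simp
lemma sm_rdistr: "s \<in> carrier S \<Longrightarrow> e \<in> carrier E \<Longrightarrow> e' \<in> carrier E \<Longrightarrow>
    sm0 s (e \<oplus>\<^bsub>E\<^esub> e') = sm0 s e \<oplus>\<^bsub>E\<^esub> sm0 s e'"
  using module.smult_r_distr[OF mES] by simp
lemma sm_assoc: "s \<in> carrier S \<Longrightarrow> s' \<in> carrier S \<Longrightarrow> e \<in> carrier E \<Longrightarrow>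
    sm0 (s \<otimes>\<^bsub>S\<^esub> s') e = sm0 s (sm0 s' e)"
  using module.smult_assoc1[OF mES] by simp

definition sig :: "'s \<Rightarrow> 'e \<times> 't \<Rightarrow> 'e \<times> 't" where "sig s = (\<lambda>(e, t). (sm0 s e, t))"
definition tau :: "'t \<Rightarrow> 'e \<times> 't \<Rightarrow> 'e \<times> 't" where "tau t = (\<lambda>(e, u). (e, t \<otimes>\<^bsub>T\<^esub> u))"

lemma sm_comm: "s \<in> carrier S \<Longrightarrow> s' \<in> carrier S \<Longrightarrow> e \<in> carrier E \<Longrightarrow>
    sm0 s (sm0 s' e) = sm0 s' (sm0 s e)"
proof -
  assume a: "s \<in> carrier S" "s' \<in> carrier S" "e \<in> carrier E"
  have "sm0 s (sm0 s' e) = sm0 (s \<otimes>\<^bsub>S\<^esub> s') e" by (rule sm_assoc[OF a, symmetric])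
  also have "\<dots> = sm0 (s' \<otimes>\<^bsub>S\<^esub> s) e" by (simp only: S.m_comm[OF a(1) a(2)])
  also have "\<dots> = sm0 s' (sm0 s e)" by (rule sm_assoc[OF a(2) a(1) a(3)])
  finally show ?thesis .
qed

lemma sm_bal: "s \<in> carrier S \<Longrightarrow> r \<in> carrier R \<Longrightarrow> e \<in> carrier E \<Longrightarrow>
    sm0 s (r \<odot>\<^bsub>E\<^esub> e) = r \<odot>\<^bsub>E\<^esub> sm0 s e"
proof -
  assume s: "s \<in> carrier S" and r: "r \<in> carrier R" and e: "e \<in> carrier E"
  have pr: "\<phi>0 r \<in> carrier S" by (rule ring_hom_closed[OF hphi r])
  have "sm0 s (r \<odot>\<^bsub>E\<^esub> e) = sm0 s (sm0 (\<phi>0 r) e)" by (simp only: compat[OF r e])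
  also have "\<dots> = sm0 (\<phi>0 r) (sm0 s e)" by (rule sm_comm[OF s pr e])
  also have "\<dots> = r \<odot>\<^bsub>E\<^esub> sm0 s e" by (rule compat[OF r sm_closed[OF s e]])
  finally show ?thesis .
qed

lemma sig_apply: "sig s (x, y) = (sm0 s x, y)" by (simp add: sig_def)
lemma tau_apply: "tau t (x, y) = (x, t \<otimes>\<^bsub>T\<^esub> y)" by (simp add: tau_def)

lemma good_sig: assumes s: "s \<in> carrier S" shows "goodmap (sig s)"
  unfolding goodmap_def
proof (intro conjI ballI)
  fix p assume "p \<in> carrier E \<times> carrier T"
  thus "sig s p \<in> carrier E \<times> carrier T" using sm_closed s by (auto simp: sig_def)
next
  fix g assume g: "g \<in> rel"
  show "push (sig s) g \<in> rel"
  proof (rule push_rel[OF _ _ _ g])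
    fix e e' t assume a: "e \<in> carrier E" "e' \<in> carrier E" "t \<in> carrier T"
    show "(\<lambda>q. delta (sig s (e \<oplus>\<^bsub>E\<^esub> e', t)) q - delta (sig s (e, t)) q - delta (sig s (e', t)) q) \<in> rel"
      unfolding sig_apply sm_rdistr[OF s a(1) a(2)]
      by (rule rel_addl'[OF sm_closed[OF s a(1)] sm_closed[OF s a(2)] a(3)])
  next
    fix e t t' assume a: "e \<in> carrier E" "t \<in> carrier T" "t' \<in> carrier T"
    show "(\<lambda>q. delta (sig s (e, t \<oplus>\<^bsub>T\<^esub> t')) q - delta (sig s (e, t)) q - delta (sig s (e, t')) q) \<in> rel"
      unfolding sig_apply by (rule rel_addr'[OF sm_closed[OF s a(1)] a(2) a(3)])
  next
    fix r e t assume a: "r \<in> carrier R" "e \<in> carrier E" "t \<in> carrier T"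
    show "(\<lambda>q. delta (sig s (r \<odot>\<^bsub>E\<^esub> e, t)) q - delta (sig s (e, f r \<otimes>\<^bsub>T\<^esub> t)) q) \<in> rel"
      unfolding sig_apply sm_bal[OF s a(1) a(2)] by (rule rel_bal'[OF a(1) sm_closed[OF s a(2)] a(3)])
  qed
qed

lemma good_tau: assumes t0: "t0 \<in> carrier T" shows "goodmap (tau t0)"
  unfolding goodmap_def
proof (intro conjI ballI)
  fix p assume "p \<in> carrier E \<times> carrier T"
  thus "tau t0 p \<in> carrier E \<times> carrier T" using t0 by (auto simp: tau_def)
next
  fix g assume g: "g \<in> rel"
  show "push (tau t0) g \<in> rel"
  proof (rule push_rel[OF _ _ _ g])
    fix e e' t assume a: "e \<in> carrier E" "e' \<in> carrier E" "t \<in> carrier T"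
    show "(\<lambda>q. delta (tau t0 (e \<oplus>\<^bsub>E\<^esub> e', t)) q - delta (tau t0 (e, t)) q - delta (tau t0 (e', t)) q) \<in> rel"
      unfolding tau_apply by (rule rel_addl'[OF a(1) a(2) T.m_closed[OF t0 a(3)]])
  next
    fix e t t' assume a: "e \<in> carrier E" "t \<in> carrier T" "t' \<in> carrier T"
    show "(\<lambda>q. delta (tau t0 (e, t \<oplus>\<^bsub>T\<^esub> t')) q - delta (tau t0 (e, t)) q - delta (tau t0 (e, t')) q) \<in> rel"
      unfolding tau_apply T.r_distr[OF a(2) a(3) t0]
      by (rule rel_addr'[OF a(1) T.m_closed[OF t0 a(2)] T.m_closed[OF t0 a(3)]])
  next
    fix r e t assume a: "r \<in> carrier R" "e \<in> carrier E" "t \<in> carrier T"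
    have fr: "f r \<in> carrier T" by (rule ring_hom_closed[OF hf a(1)])
    have eq: "t0 \<otimes>\<^bsub>T\<^esub> (f r \<otimes>\<^bsub>T\<^esub> t) = f r \<otimes>\<^bsub>T\<^esub> (t0 \<otimes>\<^bsub>T\<^esub> t)"
      by (rule T.m_lcomm[OF t0 fr a(3)])
    show "(\<lambda>q. delta (tau t0 (r \<odot>\<^bsub>E\<^esub> e, t)) q - delta (tau t0 (e, f r \<otimes>\<^bsub>T\<^esub> t)) q) \<in> rel"
      unfolding tau_apply eq by (rule rel_bal'[OF a(1) a(2) T.m_closed[OF t0 a(3)]])
  qed
qed

definition Gen where "Gen = (\<lambda>s. Op (sig s)) ` carrier S \<union> (\<lambda>t. Op (tau t)) ` carrier T"

lemma Gen_good: "A \<in> Gen \<Longrightarrow> \<exists>\<phi>. A = Op \<phi> \<and> goodmap \<phi>"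
  unfolding Gen_def using good_sig good_tau by auto

lemma M_ag: "abelian_group M" by (rule M_group) auto

lemma bicomm_M: "bicomm M Gen"
proof -
  show ?thesis
  proof (rule bicomm.intro[OF M_ag], rule bicomm_axioms.intro)
    fix A assume "A \<in> Gen" thus "addhom M A" using Gen_good Op_addhom by blast
  next
    fix A B X assume A: "A \<in> Gen" and B: "B \<in> Gen" and X: "X \<in> carrier M"
    have c1: "Op (sig s) (Op (sig s') X) = Op (sig s') (Op (sig s) X)"
      if ss: "s \<in> carrier S" "s' \<in> carrier S" for s s'
    proof -
      have "sig s (sig s' p) = sig s' (sig s p)" if p: "p \<in> carrier E \<times> carrier T" for p
      proof -
        obtain e u where "p = (e, u)" "e \<in> carrier E" using p by auto
        thus ?thesis using sm_comm[OF ss] by (simp add: sig_def)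
      qed
      thus ?thesis by (rule Op_commute[OF good_sig[OF ss(1)] good_sig[OF ss(2)] _ X])
    qed
    have c2: "Op (tau t) (Op (tau t') X) = Op (tau t') (Op (tau t) X)"
      if tt: "t \<in> carrier T" "t' \<in> carrier T" for t t'
    proof -
      have "tau t (tau t' p) = tau t' (tau t p)" if p: "p \<in> carrier E \<times> carrier T" for p
      proof -
        obtain e u where "p = (e, u)" "u \<in> carrier T" using p by auto
        thus ?thesis using T.m_lcomm[OF tt] by (simp add: tau_def)
      qed
      thus ?thesis by (rule Op_commute[OF good_tau[OF tt(1)] good_tau[OF tt(2)] _ X])
    qed
    have c3: "Op (sig s) (Op (tau t) X) = Op (tau t) (Op (sig s) X)"
      if st: "s \<in> carrier S" "t \<in> carrier T" for s t
    proof -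
      have "sig s (tau t p) = tau t (sig s p)" for p
        by (cases p) (simp add: sig_def tau_def)
      thus ?thesis by (rule Op_commute[OF good_sig[OF st(1)] good_tau[OF st(2)] _ X])
    qed
    have A': "(\<exists>s\<in>carrier S. A = Op (sig s)) \<or> (\<exists>t\<in>carrier T. A = Op (tau t))"
      using A by (auto simp: Gen_def)
    have B': "(\<exists>s\<in>carrier S. B = Op (sig s)) \<or> (\<exists>t\<in>carrier T. B = Op (tau t))"
      using B by (auto simp: Gen_def)
    show "A (B X) = B (A X)"
    proof (cases "\<exists>s\<in>carrier S. A = Op (sig s)")
      case True
      then obtain s where s: "s \<in> carrier S" "A = Op (sig s)" by blast
      show ?thesis
      proof (cases "\<exists>s\<in>carrier S. B = Op (sig s)")
        case True
        then obtain s' where s': "s' \<in> carrier S" "B = Op (sig s')" by blast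
        show ?thesis unfolding s(2) s'(2) by (rule c1[OF s(1) s'(1)])
      next
        case False
        then obtain t where t: "t \<in> carrier T" "B = Op (tau t)" using B' by blast
        show ?thesis unfolding s(2) t(2) by (rule c3[OF s(1) t(1)])
      qed
    next
      case False
      then obtain t where t: "t \<in> carrier T" "A = Op (tau t)" using A' by blast
      show ?thesis
      proof (cases "\<exists>s\<in>carrier S. B = Op (sig s)")
        case True
        then obtain s where s: "s \<in> carrier S" "B = Op (sig s)" by blast
        show ?thesis unfolding s(2) t(2) by (rule c3[OF s(1) t(1), symmetric])
      next
        case False
        then obtain t' where t': "t' \<in> carrier T" "B = Op (tau t')" using B' by blast
        show ?thesis unfolding t(2) t'(2) by (rule c2[OF t(1) t'(1)])
      qed
    qed
  qed
qed

end

context tens2 begin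

abbreviation "K \<equiv> bic M Gen"
abbreviation "N' \<equiv> with_smult M (\<lambda>F X. F X)"

lemma Op_tau_in: "t \<in> carrier T \<Longrightarrow> Op (tau t) \<in> carrier K"
proof -
  interpret B: bicomm M Gen by (rule bicomm_M)
  assume "t \<in> carrier T"
  hence "Op (tau t) \<in> Gen" by (auto simp: Gen_def)
  from B.gen_in_B[OF this] show ?thesis by (simp add: Op_ext)
qed

lemma Op_sig_in: "s \<in> carrier S \<Longrightarrow> Op (sig s) \<in> carrier K"
proof -
  interpret B: bicomm M Gen by (rule bicomm_M)
  assume "s \<in> carrier S"
  hence "Op (sig s) \<in> Gen" by (auto simp: Gen_def)
  from B.gen_in_B[OF this] show ?thesis by (simp add: Op_ext)
qed

lemma Op_eqI: "(\<And>g. g \<in> free \<Longrightarrow> Op \<phi> (cls g) = H (cls g)) \<Longrightarrow> Op \<phi> = extf M H"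
  by (subst Op_ext[symmetric], rule extf_eq) (use carrier_M in auto)

lemma phi_hom: "(\<lambda>t. Op (tau t)) \<in> ring_hom T K"
proof (rule ring_hom_memI)
  fix t assume "t \<in> carrier T" thus "Op (tau t) \<in> carrier K" by (rule Op_tau_in)
next
  fix t t' assume a: "t \<in> carrier T" "t' \<in> carrier T"
  show "Op (tau (t \<otimes>\<^bsub>T\<^esub> t')) = Op (tau t) \<otimes>\<^bsub>K\<^esub> Op (tau t')"
    unfolding bic_simps
  proof (rule Op_eqI)
    fix g assume g: "g \<in> free"
    have "push (tau (t \<otimes>\<^bsub>T\<^esub> t')) g = push (tau t \<circ> tau t') g"
      using g a by (intro push_cong) (auto simp: free_iff tau_def T.m_assoc)
    thus "Op (tau (t \<otimes>\<^bsub>T\<^esub> t')) (cls g) = Op (tau t) (Op (tau t') (cls g))"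
      using Op_comp Op_cls good_tau a g by simp
  qed
next
  fix t t' assume a: "t \<in> carrier T" "t' \<in> carrier T"
  show "Op (tau (t \<oplus>\<^bsub>T\<^esub> t')) = Op (tau t) \<oplus>\<^bsub>K\<^esub> Op (tau t')"
    unfolding bic_simps
  proof (rule Op_eqI)
    fix g assume g: "g \<in> free"
    have fin: "finite (supp g)" and sub: "supp g \<subseteq> carrier E \<times> carrier T" using g by (auto simp: free_iff)
    let ?r = "\<lambda>p q. delta (tau (t \<oplus>\<^bsub>T\<^esub> t') p) q - delta (tau t p) q - delta (tau t' p) q"
    have "(\<lambda>q. \<Sum>p\<in>supp g. g p * ?r p q) \<in> rel"
    proof (rule rel_sum[OF fin])
      fix p assume "p \<in> supp g"
      then obtain e u where p: "p = (e, u)" "e \<in> carrier E" "u \<in> carrier T" using sub by auto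
      thus "?r p \<in> rel" using rel_addr'[of e "t \<otimes>\<^bsub>T\<^esub> u" "t' \<otimes>\<^bsub>T\<^esub> u"] a
        by (simp add: tau_def T.l_distr)
    qed
    moreover have "(\<lambda>q. \<Sum>p\<in>supp g. g p * ?r p q) =
        (\<lambda>q. push (tau (t \<oplus>\<^bsub>T\<^esub> t')) g q - (push (tau t) g q + push (tau t') g q))"
      by (simp add: push_def right_diff_distrib distrib_left sum_subtractf sum.distrib diff_diff_eq)
    ultimately have "cls (push (tau (t \<oplus>\<^bsub>T\<^esub> t')) g) = cls (\<lambda>q. push (tau t) g q + push (tau t') g q)"
      using cls_eq_iff goodmap_free good_tau a g free_add by simp
    thus "Op (tau (t \<oplus>\<^bsub>T\<^esub> t')) (cls g) = Op (tau t) (cls g) \<oplus>\<^bsub>M\<^esub> Op (tau t') (cls g)"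
      using Op_cls good_tau a g add_cls goodmap_free by simp
  qed
next
  show "Op (tau \<one>\<^bsub>T\<^esub>) = \<one>\<^bsub>K\<^esub>"
    unfolding bic_simps
  proof (rule Op_eqI)
    fix g assume g: "g \<in> free"
    have "push (tau \<one>\<^bsub>T\<^esub>) g = push (\<lambda>p. p) g"
      using g by (intro push_cong) (auto simp: free_iff tau_def)
    hence "cls (push (tau \<one>\<^bsub>T\<^esub>) g) = cls g" by (simp only: push_id[OF free_finite[OF g]])
    thus "Op (tau \<one>\<^bsub>T\<^esub>) (cls g) = cls g" by (simp only: Op_cls[OF good_tau[OF T.one_closed] g])
  qed
qed

lemma compat_M: "t \<in> carrier T \<Longrightarrow> X \<in> carrier M \<Longrightarrow> Op (tau t) X = t \<odot>\<^bsub>M\<^esub> X"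
proof -
  assume t: "t \<in> carrier T" and X: "X \<in> carrier M"
  have "tensor_act T t (tensor_rep X) = push (tau t) (tensor_rep X)"
    using tensor_act_push[OF _ t] carrier_M_E[OF X] by (simp add: tau_def)
  thus ?thesis using X by (simp add: Op_def base_change_def)
qed

end

lemma a_inv_with_smult: "a_inv (with_smult M sm) = a_inv M"
  by (rule ext) (simp add: a_inv_def m_inv_def)

context tens2 begin

lemma fg_M:
  assumes fg: "fin_gen S (with_smult E sm0)"
  shows "fin_gen K N'"
proof -
  interpret B: bicomm M Gen by (rule bicomm_M)
  interpret MK: module K N' by (rule bic_module[OF bicomm_M])
  interpret ES: module S "with_smult E sm0" by (rule mES)
  obtain Xe where Xe: "finite Xe" "Xe \<subseteq> carrier E"
    and Xsp: "\<And>x. x \<in> carrier E \<Longrightarrow> \<exists>a\<in>Xe \<rightarrow> carrier S. x = finsum (with_smult E sm0) (\<lambda>v. sm0 (a v) v) Xe"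
    using fg unfolding fin_gen_def by auto
  define X0 where "X0 = (\<lambda>v. cls (delta (v, \<one>\<^bsub>T\<^esub>))) ` Xe"
  have X0: "finite X0" "X0 \<subseteq> carrier N'"
    using Xe cls_in free_delta by (auto simp: X0_def)
  define Sp where "Sp = spanof K N' X0"
  have zero_Sp: "\<zero>\<^bsub>M\<^esub> \<in> Sp" using MK.span_zero[OF X0] by (simp add: Sp_def)
  have add_Sp: "x \<in> Sp \<Longrightarrow> y \<in> Sp \<Longrightarrow> x \<oplus>\<^bsub>M\<^esub> y \<in> Sp" for x y
    using MK.span_add[OF X0] by (simp add: Sp_def)
  have neg_Sp: "x \<in> Sp \<Longrightarrow> \<ominus>\<^bsub>M\<^esub> x \<in> Sp" for x
    using MK.span_neg[OF X0] by (simp add: Sp_def a_inv_with_smult)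
  have c1: "cls (delta (sm0 s v, t)) \<in> Sp" if v: "v \<in> Xe" and s: "s \<in> carrier S" and t: "t \<in> carrier T" for s v t
  proof -
    have ve: "v \<in> carrier E" using v Xe by auto
    have "Op (sig s) (Op (tau t) (cls (delta (v, \<one>\<^bsub>T\<^esub>)))) = cls (delta (sm0 s v, t))"
      using Op_comp[OF good_sig[OF s] good_tau[OF t] free_delta] ve t
      by (simp add: push_delta sig_def tau_def)
    hence "cls (delta (sm0 s v, t)) = (Op (sig s) \<otimes>\<^bsub>K\<^esub> Op (tau t)) \<odot>\<^bsub>N'\<^esub> cls (delta (v, \<one>\<^bsub>T\<^esub>))"
      using cls_in free_delta ve by (simp add: bic_simps)
    moreover have "Op (sig s) \<otimes>\<^bsub>K\<^esub> Op (tau t) \<in> carrier K"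
      using B.mult_B_closed Op_sig_in Op_tau_in s t by blast
    moreover have "cls (delta (v, \<one>\<^bsub>T\<^esub>)) \<in> Sp"
      unfolding Sp_def using X0 v by (intro MK.span_gen) (auto simp: X0_def)
    ultimately show ?thesis using MK.span_smult[OF X0] by (simp add: Sp_def)
  qed
  have c2: "cls (delta (e, t)) \<in> Sp" if e: "e \<in> carrier E" and t: "t \<in> carrier T" for e t
  proof -
    obtain a where a: "a \<in> Xe \<rightarrow> carrier S" "e = finsum (with_smult E sm0) (\<lambda>v. sm0 (a v) v) Xe"
      using Xsp e by blast
    have av: "sm0 (a v) v \<in> carrier E" if "v \<in> Xe" for v
      using a(1) Xe(2) that sm_closed by (auto simp: Pi_iff)
    have "Y \<subseteq> Xe \<Longrightarrow> cls (delta (finsum (with_smult E sm0) (\<lambda>v. sm0 (a v) v) Y, t)) \<in> Sp"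
      if "finite Y" for Y
      using that
    proof (induction Y rule: finite_induct)
      case empty
      then show ?case using cls_delta_zero t zero_Sp by simp
    next
      case (insert x F)
      have cl: "(\<lambda>v. sm0 (a v) v) \<in> F \<rightarrow> carrier E" "sm0 (a x) x \<in> carrier E"
        using insert.prems av by auto
      have "finsum (with_smult E sm0) (\<lambda>v. sm0 (a v) v) (insert x F)
          = sm0 (a x) x \<oplus>\<^bsub>E\<^esub> finsum (with_smult E sm0) (\<lambda>v. sm0 (a v) v) F"
        using ES.finsum_insert[of F x "\<lambda>v. sm0 (a v) v"] insert cl by simp
      moreover have "finsum (with_smult E sm0) (\<lambda>v. sm0 (a v) v) F \<in> carrier E"
        using ES.finsum_closed[of "\<lambda>v. sm0 (a v) v" F] cl by simp
      moreover have ax: "a x \<in> carrier S" using a(1) insert.prems by auto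
      ultimately show ?case
        using cls_delta_add[OF cl(2) _ t] add_Sp insert c1[of x "a x" t] a t by auto
    qed
    thus ?thesis using a Xe by simp
  qed
  have c3: "cls (\<lambda>q. k * delta p q) \<in> Sp" if p: "p \<in> carrier E \<times> carrier T" for p k
  proof -
    have pos: "cls (\<lambda>q. int n * delta p q) \<in> Sp" for n
    proof (induction n)
      case 0 then show ?case using zero_Sp by (simp add: zero_M)
    next
      case (Suc n)
      have "cls (\<lambda>q. int (Suc n) * delta p q) = cls (\<lambda>q. int n * delta p q) \<oplus>\<^bsub>M\<^esub> cls (delta p)"
        using add_cls[OF free_scale[OF free_delta[OF p]] free_delta[OF p]] by (simp add: algebra_simps)
      thus ?case using add_Sp Suc c2 p by auto
    qed
    have neg: "cls (\<lambda>q. - (int n * delta p q)) \<in> Sp" for n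
    proof -
      have h: "(\<lambda>q. int n * delta p q) \<in> free" using free_scale free_delta p by blast
      have "cls (\<lambda>q. - (int n * delta p q)) \<oplus>\<^bsub>M\<^esub> cls (\<lambda>q. int n * delta p q) = \<zero>\<^bsub>M\<^esub>"
        using add_cls[OF free_neg[OF h] h] by (simp add: zero_M)
      hence "\<ominus>\<^bsub>M\<^esub> cls (\<lambda>q. int n * delta p q) = cls (\<lambda>q. - (int n * delta p q))"
        using B.minus_equality cls_in h free_neg by blast
      thus ?thesis using neg_Sp pos by metis
    qed
    show ?thesis
    proof (cases "k \<ge> 0")
      case True
      then obtain n where "k = int n" by (metis nonneg_int_cases)
      thus ?thesis using pos by simp
    next
      case False
      hence "- k \<ge> 0" by simp
  then obtain n where "- k = int n" by (metis nonneg_int_cases)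
  hence "k = - int n" by simp
      thus ?thesis using neg by simp
    qed
  qed
  have c4: "S0 \<subseteq> carrier E \<times> carrier T \<Longrightarrow> cls (\<lambda>q. \<Sum>p\<in>S0. c p * delta p q) \<in> Sp"
    if "finite S0" for S0 c
    using that
  proof (induction S0 rule: finite_induct)
    case empty then show ?case using zero_Sp by (simp add: zero_M)
  next
    case (insert x F)
    have "cls (\<lambda>q. \<Sum>p\<in>insert x F. c p * delta p q)
        = cls (\<lambda>q. c x * delta x q) \<oplus>\<^bsub>M\<^esub> cls (\<lambda>q. \<Sum>p\<in>F. c p * delta p q)"
      using add_cls[OF free_scale[OF free_delta] free_lincomb] insert by simp
    thus ?case using add_Sp c3 insert by simp
  qed
  have all: "x \<in> Sp" if x: "x \<in> carrier M" for x
  proof -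
    obtain g where g: "g \<in> free" "x = cls g" using x carrier_M by auto
    hence "g = (\<lambda>q. \<Sum>p\<in>supp g. g p * delta p q)" using repr free_iff by blast
    thus ?thesis using c4[of "supp g" g] g free_iff by metis
  qed
  show ?thesis unfolding fin_gen_def
    by (rule exI[of _ X0]) (use X0 all in \<open>auto simp: Sp_def spanof_def\<close>)
qed

end

theorem proposition4p3:
  fixes R :: "'r ring" and T :: "'t ring" and E :: "('r, 'e) module"
    and f :: "'r \<Rightarrow> 't"
  assumes "cring R" and "cring T"
    and "module R E"
    and "afg_with TYPE('s) R E"
    and "f \<in> ring_hom R T"
  shows "afg T (base_change R E T f)"
proof -
  obtain S :: "'s ring" and \<phi>0 sm0 where S: "cring S" "\<phi>0 \<in> ring_hom R S" "module S (with_smult E sm0)"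
    "\<forall>a\<in>carrier R. \<forall>x\<in>carrier E. sm0 (\<phi>0 a) x = a \<odot>\<^bsub>E\<^esub> x" "fin_gen S (with_smult E sm0)"
    using assms(4) unfolding afg_with_def by blast
  have tn: "tens R E T f"
    by (rule tens.intro[OF assms(3) assms(2)]) (simp add: tens_axioms_def assms(5))
  interpret tens2 R E T f S \<phi>0 sm0
    by (rule tens2.intro[OF tn S(1)]) (simp add: tens2_axioms_def S)
  interpret B: bicomm "base_change R E T f" Gen by (rule bicomm_M)
  show ?thesis unfolding afg_def afg_with_def
    apply (rule exI[of _ K], rule exI[of _ "\<lambda>t. Op (tau t)"], rule exI[of _ "\<lambda>F X. F X"])
    using B.B_cring phi_hom bic_module[OF bicomm_M] compat_M fg_M[OF S(5)] by auto
qed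

end
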